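(* Let $\ell,d\ge0$ be integers, $n=2^\ell$, $m=2^d$, and $\lambda=m/n=2^{d-\ell}$. Let $a$ be an integer with $d\ge a\ge\max\{1,d-\ell\}$. Then there exist a positive integer $N$ and a set $S\subseteq\mathbb{F}_2^N\setminus\{0\}$ of $m$ distinct nonzero vectors such that, for a uniformly random linear map $h:\mathbb{F}_2^N\to\mathbb{F}_2^\ell$, \[ \Pr\left[|\{x\in S: h(x)=0\}|>2^a-2\right]\ge\gamma^2\lambda^a2^{-a^2}, \] where $\gamma:=\prod_{j=1}^\infty(1-2^{-j})$.
   Context: A uniformly random linear map is chosen uniformly among all linear maps $\mathbb{F}_2^N\to\mathbb{F}_2^\ell$. *)

theory Defs
  imports "HOL-Analysis.Analysis" "HOL-Library.Z2"
begin

definition F2vec :: "nat \<Rightarrow> (nat \<Rightarrow> bit) set" where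
  "F2vec N = {x. \<forall>i\<ge>N. x i = 0}"

text \<open>Linear maps F_2^N -> F_2^l, normalised (extensionally) to 0 outside F_2^N
  so that the set of such maps is finite and in bijection with the linear maps.\<close>
definition F2lin :: "nat \<Rightarrow> nat \<Rightarrow> ((nat \<Rightarrow> bit) \<Rightarrow> (nat \<Rightarrow> bit)) set" where
  "F2lin N l = {h. (\<forall>x\<in>F2vec N. h x \<in> F2vec l)
      \<and> (\<forall>x\<in>F2vec N. \<forall>y\<in>F2vec N. h (\<lambda>i. x i + y i) = (\<lambda>i. h x i + h y i))
      \<and> (\<forall>c::bit. \<forall>x\<in>F2vec N. h (\<lambda>i. c * x i) = (\<lambda>i. c * h x i))
      \<and> (\<forall>x. x \<notin> F2vec N \<longrightarrow> h x = (\<lambda>_. 0))}"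

definition prob_lin :: "nat \<Rightarrow> nat \<Rightarrow> (((nat \<Rightarrow> bit) \<Rightarrow> (nat \<Rightarrow> bit)) \<Rightarrow> bool) \<Rightarrow> real" where
  "prob_lin N l P = real (card {h \<in> F2lin N l. P h}) / real (card (F2lin N l))"

definition gamma_const :: real where
  "gamma_const = (\<Prod>j. 1 - (1/2) ^ Suc j)"

end

theory Submission
  imports Defs
begin


declare add_bit_eq_xor[simp del] mult_bit_eq_and[simp del]

lemma bitadd_self[simp]: "(x::bit) + x = 0"
  by (metis bit_2_eq_0 mult_2 one_add_one distrib_right mult_1 add_0 mult_zero_left)

lemma F2vec_Suc: "F2vec (Suc n) = F2vec n \<union> (\<lambda>x. x(n:=1)) ` F2vec n"
proof (rule set_eqI, rule iffI)
  fix x assume x: "x \<in> F2vec (Suc n)"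
  show "x \<in> F2vec n \<union> (\<lambda>x. x(n:=1)) ` F2vec n"
  proof (cases "x n = 0")
    case True
    have "\<forall>i\<ge>n. x i = 0"
    proof (intro allI impI)
      fix i assume "n \<le> i"
      then consider "i = n" | "Suc n \<le> i" by linarith
      then show "x i = 0" using x True unfolding F2vec_def by cases auto
    qed
    then have "x \<in> F2vec n" unfolding F2vec_def by simp
    then show ?thesis by blast
  next
    case False
    then have "x n = 1" by simp
    then have "x = (x(n:=0))(n:=1)" by auto
    moreover have "x(n:=0) \<in> F2vec n" unfolding F2vec_def
    proof (intro CollectI allI impI)
      fix i assume "n \<le> i"
      then consider "i = n" | "Suc n \<le> i" by linarith
      then show "(x(n:=0)) i = 0" using x unfolding F2vec_def by cases auto
    qed
    ultimately show ?thesis by blast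
  qed
next
  fix x assume "x \<in> F2vec n \<union> (\<lambda>x. x(n:=1)) ` F2vec n"
  then show "x \<in> F2vec (Suc n)" unfolding F2vec_def by auto
qed

lemma card_F2vec: "finite (F2vec n) \<and> card (F2vec n) = 2 ^ n"
proof (induction n)
  case 0
  have "F2vec 0 = {\<lambda>_. 0}" unfolding F2vec_def by auto
  then show ?case by simp
next
  case (Suc n)
  have inj: "inj_on (\<lambda>x. x(n:=1)) (F2vec n)"
  proof (rule inj_onI)
    fix x y assume x: "x \<in> F2vec n" and y: "y \<in> F2vec n" and e: "x(n:=1) = y(n:=1)"
    have "x = (x(n:=1))(n:=0)" using x unfolding F2vec_def by (auto simp: fun_eq_iff)
    also have "\<dots> = (y(n:=1))(n:=0)" using e by simp
    also have "\<dots> = y" using y unfolding F2vec_def by (auto simp: fun_eq_iff)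
    finally show "x = y" .
  qed
  have disj: "F2vec n \<inter> (\<lambda>x. x(n:=1)) ` F2vec n = {}"
    unfolding F2vec_def by auto
  show ?case using Suc inj disj unfolding F2vec_Suc
    by (simp add: card_Un_disjoint card_image)
qed

lemma finite_F2vec[simp]: "finite (F2vec n)" using card_F2vec by blast
lemma card_F2vec'[simp]: "card (F2vec n) = 2 ^ n" using card_F2vec by blast
lemma zero_F2vec[simp]: "(\<lambda>_. 0) \<in> F2vec n" unfolding F2vec_def by auto

definition lc :: "nat \<Rightarrow> (nat \<Rightarrow> nat \<Rightarrow> bit) \<Rightarrow> (nat \<Rightarrow> bit) \<Rightarrow> (nat \<Rightarrow> bit)" where
  "lc n c y = (\<lambda>r. \<Sum>j<n. y j * c j r)"

definition hmat :: "nat \<Rightarrow> (nat \<Rightarrow> nat \<Rightarrow> bit) \<Rightarrow> ((nat \<Rightarrow> bit) \<Rightarrow> (nat \<Rightarrow> bit))" where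
  "hmat N c = (\<lambda>x. if x \<in> F2vec N then lc N c x else (\<lambda>_. 0))"

definition uv :: "nat \<Rightarrow> nat \<Rightarrow> bit" where "uv j = (\<lambda>i. if i = j then 1 else 0)"

lemma lc_in: "(\<And>j. j < n \<Longrightarrow> c j \<in> F2vec l) \<Longrightarrow> lc n c y \<in> F2vec l"
  unfolding lc_def F2vec_def by auto

lemma lc_cong: "(\<And>j. j < n \<Longrightarrow> c j = c' j) \<Longrightarrow> (\<And>j. j < n \<Longrightarrow> y j = y' j) \<Longrightarrow> lc n c y = lc n c' y'"
  unfolding lc_def by auto

lemma hmat_in: assumes "\<And>j. j < N \<Longrightarrow> c j \<in> F2vec l" shows "hmat N c \<in> F2lin N l"
proof -
  have a: "(\<lambda>i. x i + y i) \<in> F2vec N" if "x \<in> F2vec N" "y \<in> F2vec N" for x y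
    using that unfolding F2vec_def by auto
  have b: "(\<lambda>i. k * x i) \<in> F2vec N" if "x \<in> F2vec N" for x and k :: bit
    using that unfolding F2vec_def by auto
  show ?thesis unfolding F2lin_def hmat_def using lc_in[OF assms] a b
    by (auto simp: lc_def distrib_right sum.distrib sum_distrib_left mult.assoc)
qed

lemma uv_in: "j < N \<Longrightarrow> uv j \<in> F2vec N" unfolding uv_def F2vec_def by auto

lemma hmat_uv: "j < N \<Longrightarrow> hmat N c (uv j) = c j"
proof -
  have e: "(if P then 1 else 0) * (y::bit) = (if P then y else 0)" for P y by simp
  show "j < N \<Longrightarrow> hmat N c (uv j) = c j"
    using uv_in[of j N] by (simp add: hmat_def lc_def uv_def fun_eq_iff e)
qed

lemma lin_zero: assumes "h \<in> F2lin N l" shows "h (\<lambda>_. 0) = (\<lambda>_. 0)"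
proof -
  have s: "\<And>x c. x \<in> F2vec N \<Longrightarrow> h (\<lambda>i. c * x i) = (\<lambda>i. c * h x i)"
    using assms unfolding F2lin_def by blast
  have "h (\<lambda>i. 0 * (\<lambda>_. 0::bit) i) = (\<lambda>i. 0 * h (\<lambda>_. 0) i)" by (rule s[OF zero_F2vec])
  then show ?thesis by simp
qed

lemma lc_Suc: "lc (Suc n) c x = (\<lambda>r. lc n c x r + x n * c n r)"
  unfolding lc_def by simp

lemma lin_repr: assumes h: "h \<in> F2lin N l" shows "h = hmat N (\<lambda>j. h (uv j))"
proof (rule ext)
  fix x
  show "h x = hmat N (\<lambda>j. h (uv j)) x"
  proof (cases "x \<in> F2vec N")
    case False
    then show ?thesis using h unfolding F2lin_def hmat_def by auto
  next
    case True
    have add: "h (\<lambda>i. u i + v i) = (\<lambda>i. h u i + h v i)" if "u \<in> F2vec N" "v \<in> F2vec N" for u v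
      using h that unfolding F2lin_def by blast
    have sc: "h (\<lambda>i. k * u i) = (\<lambda>i. k * h u i)" if "u \<in> F2vec N" for u k
      using h that unfolding F2lin_def by blast
    have "n \<le> N \<Longrightarrow> h (\<lambda>i. if i < n then x i else 0) = lc n (\<lambda>j. h (uv j)) x" for n
    proof (induction n)
      case 0
      then show ?case using lin_zero[OF h] by (simp add: lc_def)
    next
      case (Suc n)
      have t1: "(\<lambda>i. if i < n then x i else 0) \<in> F2vec N" using Suc.prems unfolding F2vec_def by auto
      have t2: "(\<lambda>i. x n * uv n i) \<in> F2vec N" using Suc.prems unfolding F2vec_def uv_def by auto
      have eq: "(\<lambda>i. if i < Suc n then x i else 0) = (\<lambda>i. (\<lambda>i. if i < n then x i else 0) i + (\<lambda>i. x n * uv n i) i)"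
        by (auto simp: fun_eq_iff uv_def less_Suc_eq)
      have "h (\<lambda>i. x n * uv n i) = (\<lambda>i. x n * h (uv n) i)"
        using sc[of "uv n" "x n"] uv_in[of n N] Suc.prems by simp
      then show ?case unfolding eq add[OF t1 t2] using Suc by (simp add: lc_Suc)
    qed
    from this[of N] have "h (\<lambda>i. if i < N then x i else 0) = lc N (\<lambda>j. h (uv j)) x" by simp
    moreover have "(\<lambda>i. if i < N then x i else 0) = x" using True unfolding F2vec_def by (auto simp: fun_eq_iff)
    ultimately show ?thesis using True unfolding hmat_def by simp
  qed
qed

lemma hmat_cong: "(\<And>j. j < N \<Longrightarrow> c j = c' j) \<Longrightarrow> hmat N c = hmat N c'"
  unfolding hmat_def using lc_cong[of N c c'] by auto

lemma F2lin_eq: "F2lin N l = hmat N ` (PiE {..<N} (\<lambda>_. F2vec l))"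
proof
  show "F2lin N l \<subseteq> hmat N ` (PiE {..<N} (\<lambda>_. F2vec l))"
  proof
    fix h assume h: "h \<in> F2lin N l"
    have "h = hmat N (restrict (\<lambda>j. h (uv j)) {..<N})"
      using lin_repr[OF h] hmat_cong[of N "\<lambda>j. h (uv j)" "restrict (\<lambda>j. h (uv j)) {..<N}"] by simp
    moreover have "restrict (\<lambda>j. h (uv j)) {..<N} \<in> PiE {..<N} (\<lambda>_. F2vec l)"
      using h uv_in unfolding F2lin_def by auto
    ultimately show "h \<in> hmat N ` (PiE {..<N} (\<lambda>_. F2vec l))" by blast
  qed
next
  show "hmat N ` (PiE {..<N} (\<lambda>_. F2vec l)) \<subseteq> F2lin N l"
    using hmat_in by (auto simp: PiE_def Pi_def)
qed

lemma hmat_inj: "inj_on (hmat N) (PiE {..<N} (\<lambda>_. F2vec l))"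
proof (rule inj_onI)
  fix c c' assume c: "c \<in> PiE {..<N} (\<lambda>_. F2vec l)" and c': "c' \<in> PiE {..<N} (\<lambda>_. F2vec l)"
    and e: "hmat N c = hmat N c'"
  have "\<And>j. j \<in> {..<N} \<Longrightarrow> c j = c' j" using e hmat_uv by (metis lessThan_iff)
  then show "c = c'" using c c' by (rule PiE_ext[rotated 2]) 
qed

lemma card_F2lin: "card (F2lin N l) = (2 ^ l) ^ N \<and> finite (F2lin N l)"
  unfolding F2lin_eq using hmat_inj[of N l]
  by (simp add: card_image card_PiE finite_PiE)



declare add_bit_eq_xor[simp del] mult_bit_eq_and[simp del]

lemma bit_cases: "(x::bit) = 0 \<or> x = 1" using bit_not_zero_iff by blast

lemma bit_aux: "(a::bit) + y * v = b + z * v \<Longrightarrow> y \<noteq> z \<Longrightarrow> v = a + b"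
proof -
  have l: "(a::bit) = b + v \<Longrightarrow> v = a + b" for a b v
    using bit_cases[of a] bit_cases[of b] bit_cases[of v] by auto
  assume e: "a + y * v = b + z * v" and yz: "y \<noteq> z"
  then consider "y = 0" "z = 1" | "y = 1" "z = 0" using bit_cases[of y] bit_cases[of z] by auto
  then show "v = a + b"
  proof cases
    case 1 then show ?thesis using e l[of a b v] by simp
  next
    case 2 then show ?thesis using e l[of b a v] by (simp add: add.commute)
  qed
qed

lemma bit_cancel: "(a::bit) + t = b + t \<Longrightarrow> a = b" by simp

lemma lc_add: "lc n c (\<lambda>j. y j + z j) = (\<lambda>r. lc n c y r + lc n c z r)"
  unfolding lc_def by (simp add: distrib_right sum.distrib)

lemma ind_ext:
  assumes c: "c \<in> PiE {..<i} (\<lambda>_. F2vec l)" and inj: "inj_on (lc i c) (F2vec i)"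
    and v: "v \<notin> lc i c ` F2vec i"
  shows "inj_on (lc (Suc i) (c(i:=v))) (F2vec (Suc i))"
proof (rule inj_onI)
  fix y z assume y: "y \<in> F2vec (Suc i)" and z: "z \<in> F2vec (Suc i)"
    and e: "lc (Suc i) (c(i:=v)) y = lc (Suc i) (c(i:=v)) z"
  have key: "lc (Suc i) (c(i:=v)) u = (\<lambda>r. lc i c (u(i:=0)) r + u i * v r)" for u
  proof -
    have "lc i (c(i:=v)) u = lc i c (u(i:=0))" by (rule lc_cong) auto
    then show ?thesis by (simp add: lc_Suc)
  qed
  have y0: "y(i:=0) \<in> F2vec i" and z0: "z(i:=0) \<in> F2vec i"
  proof -
    have "(u(i:=0)) \<in> F2vec i" if u: "u \<in> F2vec (Suc i)" for u
      unfolding F2vec_def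
    proof (intro CollectI allI impI)
      fix j assume "i \<le> j" then show "(u(i:=0)) j = 0" using u unfolding F2vec_def by (cases "j = i") auto
    qed
    then show "y(i:=0) \<in> F2vec i" "z(i:=0) \<in> F2vec i" using y z by auto
  qed
  have e2: "\<And>r. lc i c (y(i:=0)) r + y i * v r = lc i c (z(i:=0)) r + z i * v r"
    using e unfolding key by (simp add: fun_eq_iff)
  show "y = z"
  proof (cases "y i = z i")
    case True
    then have "lc i c (y(i:=0)) = lc i c (z(i:=0))" using e2 by (auto simp: fun_eq_iff)
    then have "y(i:=0) = z(i:=0)" using inj y0 z0 by (simp add: inj_on_def)
    then have "(y(i:=0))(i := y i) = (z(i:=0))(i := z i)" using True by simp
    then show ?thesis by simp
  next
    case False
    have "v = (\<lambda>r. lc i c (y(i:=0)) r + lc i c (z(i:=0)) r)"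
      using bit_aux[OF e2 False] by (simp add: fun_eq_iff)
    also have "\<dots> = lc i c (\<lambda>j. (y(i:=0)) j + (z(i:=0)) j)" by (rule lc_add[symmetric])
    finally have "v \<in> lc i c ` F2vec i" using y0 z0 unfolding F2vec_def by auto
    then show ?thesis using v by blast
  qed
qed

definition IND :: "nat \<Rightarrow> nat \<Rightarrow> (nat \<Rightarrow> nat \<Rightarrow> bit) set" where
  "IND l i = {c \<in> PiE {..<i} (\<lambda>_. F2vec l). inj_on (lc i c) (F2vec i)}"

lemma IND_card: "i \<le> l \<Longrightarrow> finite (IND l i) \<and> card (IND l i) \<ge> (\<Prod>j<i. 2^l - 2^j)"
proof (induction i)
  case 0
  have "F2vec 0 = {\<lambda>_. 0}" unfolding F2vec_def by auto
  then have "(\<lambda>_. undefined) \<in> IND l 0" unfolding IND_def by auto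
  moreover have "finite (IND l 0)" unfolding IND_def by (simp add: finite_PiE)
  ultimately have "card (IND l 0) > 0" "finite (IND l 0)" by (auto simp: card_gt_0_iff)
  then show ?case by simp
next
  case (Suc i)
  have il: "i < l" using Suc.prems by simp
  have fin: "finite (IND l (Suc i))" unfolding IND_def by (simp add: finite_PiE)
  define sp where "sp c = lc i c ` F2vec i" for c
  define ex where "ex p = (fst p)(i := snd p)" for p :: "(nat \<Rightarrow> nat \<Rightarrow> bit) \<times> (nat \<Rightarrow> bit)"
  let ?S = "Sigma (IND l i) (\<lambda>c. F2vec l - sp c)"
  have cardsp: "card (F2vec l - sp c) = 2^l - 2^i" if "c \<in> IND l i" for c
  proof -
    have "card (sp c) = 2 ^ i" using that unfolding IND_def sp_def by (simp add: card_image)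
    moreover have "sp c \<subseteq> F2vec l" using that unfolding IND_def sp_def
      by (auto intro!: lc_in simp: PiE_def Pi_def)
    ultimately show ?thesis by (simp add: card_Diff_subset finite_subset)
  qed
  have finS: "finite ?S" using Suc.IH il by auto
  have "card ?S = (\<Sum>c\<in>IND l i. 2^l - 2^i)" using Suc.IH il cardsp
    by (simp add: card_SigmaI)
  also have "\<dots> = card (IND l i) * (2^l - 2^i)" by simp
  finally have cS: "card ?S = card (IND l i) * (2^l - 2^i)" .
  have sub: "ex ` ?S \<subseteq> IND l (Suc i)"
  proof
    fix q assume "q \<in> ex ` ?S"
    then obtain c v where c: "c \<in> IND l i" and v: "v \<in> F2vec l" "v \<notin> sp c" and q: "q = c(i:=v)"
      unfolding ex_def by auto
    have "c(i:=v) \<in> PiE {..<Suc i} (\<lambda>_. F2vec l)" using c v unfolding IND_def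
      by (auto simp: PiE_def Pi_def extensional_def)
    moreover have "inj_on (lc (Suc i) (c(i:=v))) (F2vec (Suc i))"
      using c v ind_ext unfolding IND_def sp_def by blast
    ultimately show "q \<in> IND l (Suc i)" unfolding IND_def q by blast
  qed
  have inj: "inj_on ex ?S"
  proof (rule inj_onI)
    fix p q assume p: "p \<in> ?S" and q: "q \<in> ?S" and e: "ex p = ex q"
    have pi: "fst p i = undefined" "fst q i = undefined" using p q unfolding IND_def by (auto simp: PiE_def extensional_def)
    have "snd p = snd q" using e unfolding ex_def by (metis fun_upd_same)
    moreover have "fst p = fst q" using e pi unfolding ex_def by (metis fun_upd_triv fun_upd_upd)
    ultimately show "p = q" by (simp add: prod_eq_iff)
  qed
  have "card ?S \<le> card (IND l (Suc i))" using card_inj_on_le[OF inj sub fin] .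
  then have "card (IND l i) * (2^l - 2^i) \<le> card (IND l (Suc i))" using cS by simp
  moreover have "(\<Prod>j<i. 2^l - 2^j) * (2^l - 2^i) \<le> card (IND l i) * (2^l - 2^i)"
    using Suc.IH il by (simp add: mult_le_mono1)
  ultimately have "(\<Prod>j<Suc i. 2^l - 2^j) \<le> card (IND l (Suc i))"
    unfolding prod.lessThan_Suc by (rule order_trans[rotated])
  then show ?case using fin by simp
qed



lemma gamma_f: "0 \<le> 1 - (1/2::real)^Suc j \<and> 1 - (1/2::real)^Suc j \<le> 1"
proof -
  have "(1/2::real)^Suc j \<le> 1" by (rule power_le_one) auto
  then show ?thesis by simp
qed

lemma gamma_conv: "convergent_prod (\<lambda>j. 1 - (1/2::real)^Suc j)"
proof (rule abs_convergent_prod_imp_convergent_prod, rule summable_imp_abs_convergent_prod)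
  have "summable (\<lambda>i. (1/2::real)^i)" by (rule summable_geometric) simp
  then have "summable (\<lambda>i. (1/2::real)^Suc i)" by (subst summable_Suc_iff)
  then show "summable (\<lambda>i. norm (1 - (1/2::real)^Suc i - 1))" by simp
qed

lemma gamma_nonneg: "0 \<le> gamma_const"
proof -
  have "(\<lambda>n. \<Prod>i\<le>n. 1 - (1/2::real)^Suc i) \<longlonglongrightarrow> gamma_const"
    unfolding gamma_const_def by (rule convergent_prod_LIMSEQ[OF gamma_conv])
  moreover have "\<exists>N. \<forall>n\<ge>N. 0 \<le> (\<Prod>i\<le>n. 1 - (1/2::real)^Suc i)"
    using gamma_f by (auto intro!: prod_nonneg)
  ultimately show ?thesis by (rule LIMSEQ_le_const)
qed

lemma gamma_le: "gamma_const \<le> (\<Prod>j<k. 1 - (1/2::real)^Suc j)"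
  unfolding gamma_const_def
proof (rule prodinf_le_const[OF gamma_conv])
  fix n assume "k \<le> n"
  then show "(\<Prod>j<n. 1 - (1/2::real)^Suc j) \<le> (\<Prod>j<k. 1 - (1/2::real)^Suc j)"
  proof (induction rule: dec_induct)
    case base then show ?case by simp
  next
    case (step m)
    have "(\<Prod>j<Suc m. 1 - (1/2::real)^Suc j) = (\<Prod>j<m. 1 - (1/2::real)^Suc j) * (1 - (1/2)^Suc m)"
      by simp
    also have "\<dots> \<le> (\<Prod>j<m. 1 - (1/2::real)^Suc j)"
    proof -
      have "0 \<le> (\<Prod>j<m. 1 - (1/2::real)^Suc j)" by (rule prod_nonneg) (use gamma_f in blast)
      then show ?thesis using gamma_f[of m] by (intro mult_left_le) auto
    qed
    finally show ?case using step by simp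
  qed
qed

lemma gamma_le1: "gamma_const \<le> 1" using gamma_le[of 0] by simp

lemma ratio: assumes "k \<le> l"
  shows "gamma_const \<le> (\<Prod>j<k. (2^l - 2^j::real)) / 2^(l*k)"
proof -
  have "(\<Prod>j<k. (2^l - 2^j::real)) / 2^(l*k) = (\<Prod>j<k. (2^l - 2^j::real)) / (\<Prod>j<k. 2^l)"
    by (simp add: power_mult)
  also have "\<dots> = (\<Prod>j<k. (2^l - 2^j) / 2^l::real)" by (rule prod_dividef[symmetric])
  also have "\<dots> = (\<Prod>j<k. 1 - 2^j / 2^l::real)" by (rule prod.cong) (auto simp: diff_divide_distrib)
  also have "\<dots> = (\<Prod>j<k. 1 - 2^(k - Suc j) / 2^l::real)"
    by (rule sum.nat_diff_reindex[symmetric, THEN subst]) (rule prod.nat_diff_reindex[symmetric])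
  finally have eq: "(\<Prod>j<k. (2^l - 2^j::real)) / 2^(l*k) = (\<Prod>j<k. 1 - 2^(k - Suc j) / 2^l::real)" .
  have "(\<Prod>j<k. 1 - (1/2::real)^Suc j) \<le> (\<Prod>j<k. 1 - 2^(k - Suc j) / 2^l::real)"
  proof (rule prod_mono)
    fix j assume j: "j \<in> {..<k}"
    have e: "k - Suc j + Suc j = k" using j by simp
    have "(2::real)^(k - Suc j) * 2^Suc j = 2^k" by (simp only: power_add[symmetric] e)
    also have "\<dots> \<le> 2^l" using assms by simp
    finally have "(2::real)^(k - Suc j) / 2^l \<le> 1 / 2^Suc j"
      by (simp add: field_simps)
    then show "0 \<le> 1 - (1/2::real)^Suc j \<and> 1 - (1/2::real)^Suc j \<le> 1 - 2^(k - Suc j) / 2^l"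
      using gamma_f[of j] by (simp add: power_one_over)
  qed
  then show ?thesis using eq gamma_le[of k] by simp
qed



declare add_bit_eq_xor[simp del] mult_bit_eq_and[simp del]

definition Phi :: "nat \<Rightarrow> nat \<Rightarrow> (nat \<Rightarrow> nat \<Rightarrow> bit) \<Rightarrow> (nat \<Rightarrow> nat \<Rightarrow> bit) \<Rightarrow> (nat \<Rightarrow> bit) \<Rightarrow> (nat \<Rightarrow> nat \<Rightarrow> bit)" where
  "Phi k a c t w = (\<lambda>j. if j < k then c j else if j < k + a then lc k c (t j) else if j = k + a then w else undefined)"

lemma Phi_in:
  assumes c: "c \<in> PiE {..<k} (\<lambda>_. F2vec l)" and w: "w \<in> F2vec l"
  shows "Phi k a c t w \<in> PiE {..<k+a+1} (\<lambda>_. F2vec l)"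
proof -
  have "lc k c (t j) \<in> F2vec l" for j using c by (intro lc_in) (auto simp: PiE_def Pi_def)
  then show ?thesis using c w unfolding Phi_def by (auto simp: PiE_def Pi_def extensional_def)
qed

lemma Phi_inj: "inj_on (\<lambda>(c, t, w). Phi k a c t w) (IND l k \<times> (PiE {k..<k+a} (\<lambda>_. F2vec k) \<times> F2vec l))"
proof (rule inj_onI)
  fix p q assume p: "p \<in> IND l k \<times> (PiE {k..<k+a} (\<lambda>_. F2vec k) \<times> F2vec l)"
    and q: "q \<in> IND l k \<times> (PiE {k..<k+a} (\<lambda>_. F2vec k) \<times> F2vec l)"
    and e0: "(\<lambda>(c, t, w). Phi k a c t w) p = (\<lambda>(c, t, w). Phi k a c t w) q"
  obtain c t w where pp: "p = (c, t, w)" by (cases p) auto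
  obtain c' t' w' where qq: "q = (c', t', w')" by (cases q) auto
  have c: "c \<in> IND l k" and t: "t \<in> PiE {k..<k+a} (\<lambda>_. F2vec k)"
    using p unfolding pp by auto
  have c': "c' \<in> IND l k" and t': "t' \<in> PiE {k..<k+a} (\<lambda>_. F2vec k)"
    using q unfolding qq by auto
  have e: "Phi k a c t w = Phi k a c' t' w'" using e0 unfolding pp qq by simp
  have ej: "\<And>j. Phi k a c t w j = Phi k a c' t' w' j" using e by simp
  have "c j = c' j" if "j \<in> {..<k}" for j using ej[of j] that unfolding Phi_def by simp
  then have cc: "c = c'" using c c' unfolding IND_def by (intro PiE_ext[of c "{..<k}" _ c']) auto
  have "t j = t' j" if j: "j \<in> {k..<k+a}" for j
  proof -
    have "lc k c (t j) = lc k c (t' j)" using ej[of j] j cc unfolding Phi_def by simp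
    moreover have "inj_on (lc k c) (F2vec k)" using c unfolding IND_def by simp
    moreover have "t j \<in> F2vec k" "t' j \<in> F2vec k" using t t' j by auto
    ultimately show ?thesis by (simp add: inj_on_def)
  qed
  then have "t = t'" using t t' by (intro PiE_ext[of t "{k..<k+a}" _ t']) auto
  moreover have "w = w'" using ej[of "k+a"] unfolding Phi_def by simp
  ultimately show "p = q" using cc unfolding pp qq by simp
qed

lemma card_bit: "card (UNIV :: bit set) = 2"
proof -
  have u: "(UNIV :: bit set) = {0, 1}" using bit_cases by auto
  have "card {0::bit, 1} = 2" by simp
  then show ?thesis unfolding u .
qed

lemma kernel_big:
  assumes c: "c \<in> PiE {..<k} (\<lambda>_. F2vec l)"
  shows "2 ^ a \<le> card {x \<in> F2vec (k+a). hmat (k+a+1) (Phi k a c t w) x = (\<lambda>_. 0)}"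
proof -
  define psi where "psi y = (\<lambda>i. if i < k then (\<Sum>j\<in>{k..<k+a}. y j * t j i) else if i < k + a then y i else 0)"
    for y :: "nat \<Rightarrow> bit"
  let ?Y = "PiE {k..<k+a} (\<lambda>_. UNIV :: bit set)"
  let ?K = "{x \<in> F2vec (k+a). hmat (k+a+1) (Phi k a c t w) x = (\<lambda>_. 0)}"
  have cY: "card ?Y = 2 ^ a" by (simp add: card_PiE card_bit)
  have inj: "inj_on psi ?Y"
  proof (rule inj_onI)
    fix y y' assume y: "y \<in> ?Y" and y': "y' \<in> ?Y" and e: "psi y = psi y'"
    have "y j = y' j" if "j \<in> {k..<k+a}" for j
      using fun_cong[OF e, of j] that unfolding psi_def by simp
    then show "y = y'" using y y' by (intro PiE_ext[of y "{k..<k+a}" _ y']) auto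
  qed
  have sub: "psi ` ?Y \<subseteq> ?K"
  proof
    fix x assume "x \<in> psi ` ?Y"
    then obtain y where x: "x = psi y" by blast
    have xin: "x \<in> F2vec (k+a)" unfolding x psi_def F2vec_def by auto
    then have xin2: "x \<in> F2vec (k+a+1)" unfolding F2vec_def by auto
    have "lc (k+a+1) (Phi k a c t w) x r = 0" for r
    proof -
      let ?c = "Phi k a c t w"
      have split: "{..<k+a} = {..<k} \<union> {k..<k+a}" by auto
      have "lc (k+a+1) ?c x r = (\<Sum>j<k+a. x j * ?c j r) + x (k+a) * ?c (k+a) r"
        unfolding lc_def by simp
      also have "x (k+a) = 0" unfolding x psi_def by simp
      also have "(\<Sum>j<k+a. x j * ?c j r) = (\<Sum>j<k. x j * ?c j r) + (\<Sum>j\<in>{k..<k+a}. x j * ?c j r)"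
        unfolding split by (rule sum.union_disjoint) auto
      also have "(\<Sum>j<k. x j * ?c j r) = (\<Sum>j<k. (\<Sum>i\<in>{k..<k+a}. y i * t i j) * c j r)"
        unfolding x psi_def Phi_def by (rule sum.cong) auto
      also have "\<dots> = (\<Sum>j<k. \<Sum>i\<in>{k..<k+a}. y i * t i j * c j r)"
        by (simp add: sum_distrib_right)
      also have "\<dots> = (\<Sum>i\<in>{k..<k+a}. \<Sum>j<k. y i * t i j * c j r)"
        by (rule sum.swap)
      also have "(\<Sum>j\<in>{k..<k+a}. x j * ?c j r) = (\<Sum>i\<in>{k..<k+a}. y i * (\<Sum>j<k. t i j * c j r))"
        unfolding x psi_def Phi_def lc_def by (rule sum.cong) auto
      also have "\<dots> = (\<Sum>i\<in>{k..<k+a}. \<Sum>j<k. y i * t i j * c j r)"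
        by (simp add: sum_distrib_left mult.assoc)
      finally show ?thesis by simp
    qed
    then have "hmat (k+a+1) (Phi k a c t w) x = (\<lambda>_. 0)"
      using xin2 unfolding hmat_def by (simp add: fun_eq_iff)
    then show "x \<in> ?K" using xin by simp
  qed
  have "finite ?K" by simp
  then have "card (psi ` ?Y) \<le> card ?K" using sub by (rule card_mono)
  then show ?thesis using inj cY by (simp add: card_image)
qed

lemma main_lemma:
  fixes k a l :: nat
  assumes kl: "k \<le> l" and a1: "1 \<le> a"
  shows "\<exists>S. S \<subseteq> F2vec (k+a+1) - {\<lambda>_. 0} \<and> card S = 2 ^ (k+a) \<and>
    prob_lin (k+a+1) l (\<lambda>h. real (card {x \<in> S. h x = (\<lambda>_. 0)}) > 2 ^ a - 2)
      \<ge> gamma_const * 2^(k*a) / 2^(l*a)"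
proof -
  define N where "N = k + a + 1"
  define S where "S = (F2vec (k+a) - {\<lambda>_. 0}) \<union> {uv (k+a)}"
  have uvn: "uv (k+a) \<notin> F2vec (k+a)" unfolding uv_def F2vec_def by auto
  have uvnz: "uv (k+a) \<noteq> (\<lambda>_. 0)" unfolding uv_def by (auto simp: fun_eq_iff)
  have Ssub: "S \<subseteq> F2vec (k+a+1) - {\<lambda>_. 0}"
    unfolding S_def using uvnz uv_in[of "k+a" "k+a+1"] by (auto simp: F2vec_def)
  have cS: "card S = 2 ^ (k+a)"
  proof -
    have "card (F2vec (k+a) - {\<lambda>_. 0}) = 2^(k+a) - 1" by (simp add: card_Diff_singleton)
    moreover have "(1::nat) \<le> 2^(k+a)" by simp
    ultimately show ?thesis unfolding S_def using uvn by simp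
  qed
  define P where "P h = (real (card {x \<in> S. h x = (\<lambda>_. 0)}) > 2 ^ a - 2)" for h :: "(nat \<Rightarrow> bit) \<Rightarrow> (nat \<Rightarrow> bit)"
  define Dm where "Dm = IND l k \<times> (PiE {k..<k+a} (\<lambda>_. F2vec k) \<times> F2vec l)"
  define phi where "phi = (\<lambda>(c, t, w). Phi k a c t w)"
  have phiD: "phi ` Dm \<subseteq> PiE {..<N} (\<lambda>_. F2vec l)"
  proof
    fix f assume "f \<in> phi ` Dm"
    then obtain c t w where ctw: "(c, t, w) \<in> Dm" and f: "f = Phi k a c t w"
      unfolding phi_def by auto
    have "c \<in> PiE {..<k} (\<lambda>_. F2vec l)" "w \<in> F2vec l" using ctw unfolding Dm_def IND_def by auto
    then show "f \<in> PiE {..<N} (\<lambda>_. F2vec l)" unfolding f N_def by (rule Phi_in)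
  qed
  have injphi: "inj_on phi Dm" unfolding phi_def Dm_def by (rule Phi_inj)
  have injh: "inj_on (hmat N) (phi ` Dm)" using hmat_inj[of N l] phiD by (rule inj_on_subset)
  have good: "hmat N ` phi ` Dm \<subseteq> {h \<in> F2lin N l. P h}"
  proof
    fix h assume "h \<in> hmat N ` phi ` Dm"
    then obtain c t w where ctw: "(c, t, w) \<in> Dm" and h: "h = hmat N (Phi k a c t w)"
      unfolding phi_def by auto
    have c: "c \<in> PiE {..<k} (\<lambda>_. F2vec l)" using ctw unfolding Dm_def IND_def by auto
    have inF: "h \<in> F2lin N l" using phiD ctw unfolding h phi_def F2lin_eq by force
    let ?K = "{x \<in> F2vec (k+a). h x = (\<lambda>_. 0)}"
    have K: "2 ^ a \<le> card ?K" using kernel_big[OF c, of a t w] unfolding h N_def by simp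
    have "?K - {\<lambda>_. 0} \<subseteq> {x \<in> S. h x = (\<lambda>_. 0)}" unfolding S_def by auto
    then have "card (?K - {\<lambda>_. 0}) \<le> card {x \<in> S. h x = (\<lambda>_. 0)}"
      by (intro card_mono) (auto simp: S_def)
    moreover have "card ?K \<le> card (?K - {\<lambda>_. 0}) + 1"
      by (metis (no_types, lifting) card_Diff1_le card_Diff_singleton_if finite_F2vec finite_subset mem_Collect_eq subsetI le_add1 One_nat_def
          Suc_eq_plus1 card_Suc_Diff1 order_refl)
    ultimately have "2 ^ a \<le> card {x \<in> S. h x = (\<lambda>_. 0)} + 1" using K by linarith
    then have "(2::real) ^ a \<le> real (card {x \<in> S. h x = (\<lambda>_. 0)}) + 1"
      by (metis (mono_tags, lifting) of_nat_1 of_nat_add of_nat_le_iff of_nat_numeral of_nat_power)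
    then have "P h" unfolding P_def by simp
    then show "h \<in> {h \<in> F2lin N l. P h}" using inF by simp
  qed
  have finE: "finite {h \<in> F2lin N l. P h}" using card_F2lin[of N l] by simp
  have "card (hmat N ` phi ` Dm) = card Dm"
    using injh injphi by (simp add: card_image)
  then have cE: "card Dm \<le> card {h \<in> F2lin N l. P h}"
    using card_mono[OF finE good] by simp
  have cD: "card Dm = card (IND l k) * ((2^k)^a * 2^l)"
    unfolding Dm_def using IND_card[OF kl] by (simp add: card_cartesian_product card_PiE)
  have prodeq: "real (\<Prod>j<k. 2^l - 2^j :: nat) = (\<Prod>j<k. (2^l - 2^j :: real))"
  proof -
    have "real (\<Prod>j<k. 2^l - 2^j :: nat) = (\<Prod>j<k. real (2^l - 2^j :: nat))" by simp
    also have "\<dots> = (\<Prod>j<k. (2^l - 2^j :: real))"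
    proof (rule prod.cong)
      fix j assume "j \<in> {..<k}"
      then have "(2::nat)^j \<le> 2^l" using kl by (intro power_increasing) auto
      then show "real (2^l - 2^j :: nat) = (2^l - 2^j :: real)" by (simp add: of_nat_diff)
    qed simp
    finally show ?thesis .
  qed
  have I: "(\<Prod>j<k. (2^l - 2^j :: real)) \<le> real (card (IND l k))"
    using IND_card[OF kl] prodeq by (metis of_nat_le_iff)
  have "gamma_const * 2^(k*a) / 2^(l*a) \<le> (\<Prod>j<k. (2^l - 2^j::real)) / 2^(l*k) * 2^(k*a) / 2^(l*a)"
  proof -
    have "gamma_const * 2^(k*a) \<le> (\<Prod>j<k. (2^l - 2^j::real)) / 2^(l*k) * 2^(k*a)"
      by (rule mult_right_mono[OF ratio[OF kl]]) simp
    then show ?thesis by (rule divide_right_mono) simp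
  qed
  also have "\<dots> = (\<Prod>j<k. (2^l - 2^j::real)) * ((2^k)^a * 2^l) / (2^l)^N"
  proof -
    have "(2::real)^(l*N) = 2^(l*k) * 2^(l*a) * 2^l" unfolding N_def
      by (simp add: algebra_simps power_add)
    then show ?thesis by (simp add: power_mult[symmetric] power_mult_distrib field_simps)
  qed
  also have "\<dots> \<le> real (card Dm) / (2^l)^N"
    unfolding cD using I by (simp add: divide_right_mono)
  also have "\<dots> \<le> real (card {h \<in> F2lin N l. P h}) / (2^l)^N"
    using cE by (simp add: divide_right_mono)
  also have "\<dots> = prob_lin N l P"
    unfolding prob_lin_def using card_F2lin[of N l] by simp
  finally show ?thesis using Ssub cS unfolding N_def P_def by blast
qed

theorem propositionB5:
  fixes l d a :: nat
  assumes "1 \<le> a" and "int d - int l \<le> int a" and "a \<le> d"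
  shows "\<exists>N::nat. N > 0 \<and> (\<exists>S. S \<subseteq> F2vec N - {\<lambda>_. 0} \<and> card S = 2 ^ d \<and>
    prob_lin N l (\<lambda>h. real (card {x \<in> S. h x = (\<lambda>_. 0)}) > 2 ^ a - 2)
      \<ge> gamma_const ^ 2 * (2 ^ d / 2 ^ l) ^ a * (1 / 2 ^ (a ^ 2)))"
proof -
  define k where "k = d - a"
  have kl: "k \<le> l" and dk: "d = k + a" using assms unfolding k_def by auto
  obtain S where S: "S \<subseteq> F2vec (k+a+1) - {\<lambda>_. 0}" "card S = 2 ^ (k+a)"
    and pr: "prob_lin (k+a+1) l (\<lambda>h. real (card {x \<in> S. h x = (\<lambda>_. 0)}) > 2 ^ a - 2)
      \<ge> gamma_const * 2^(k*a) / 2^(l*a)"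
    using main_lemma[OF kl assms(1)] by blast
  have eq: "(2 ^ d / 2 ^ l) ^ a * (1 / 2 ^ (a ^ 2)) = (2::real)^(k*a) / 2^(l*a)"
  proof -
    have "(2 ^ d / 2 ^ l) ^ a * (1 / 2 ^ (a ^ 2)) = (2::real)^(d*a) / 2^(l*a) / 2^(a*a)"
      by (simp add: power_divide power_mult[symmetric] power2_eq_square)
    also have "(2::real)^(d*a) = 2^(k*a) * 2^(a*a)" unfolding dk by (simp add: algebra_simps power_add)
    finally show ?thesis by simp
  qed
  have g: "gamma_const ^ 2 \<le> gamma_const"
    using gamma_nonneg gamma_le1 by (simp add: power2_eq_square mult_left_le)
  have "gamma_const ^ 2 * (2 ^ d / 2 ^ l) ^ a * (1 / 2 ^ (a ^ 2)) = gamma_const ^ 2 * ((2::real)^(k*a) / 2^(l*a))"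
    by (subst mult.assoc, subst eq) (rule refl)
  also have "\<dots> \<le> gamma_const * ((2::real)^(k*a) / 2^(l*a))"
    using g by (rule mult_right_mono) simp
  also have "\<dots> \<le> prob_lin (k+a+1) l (\<lambda>h. real (card {x \<in> S. h x = (\<lambda>_. 0)}) > 2 ^ a - 2)"
    using pr by simp
  finally show ?thesis using S unfolding dk by (intro exI[of _ "k+a+1"]) auto
qed

end
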